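(* Let $S$ be a connected graph. Then every connected $S$-free graph is super-edge-connected if and only if $S$ is an induced subgraph of $P_3$.
   Context: All graphs are finite and simple. $P_n$ denotes the path on $n$ vertices. For a graph $S$, a graph $G$ is $S$-free if $G$ has no induced subgraph isomorphic to $S$. An edge-cut of a connected graph $G$ is a set $F\subseteq E(G)$ such that $G-F$ is disconnected; the edge-connectivity $\kappa'(G)$ is the minimum size of an edge-cut. A connected graph $G$ is super-edge-connected if every minimum edge-cut of $G$ is the set of all edges incident with some single vertex, i.e. every minimum edge-cut isolates a vertex. *)

theory Defs
  imports Main
begin

type_synonym 'a ugraph = "'a set \<times> 'a set set"

definition graph :: "'a ugraph \<Rightarrow> bool" where
  "graph G \<longleftrightarrow> finite (fst G) \<and> (\<forall>e\<in>snd G. e \<subseteq> fst G \<and> card e = 2)"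

definition adj :: "'a ugraph \<Rightarrow> 'a \<Rightarrow> 'a \<Rightarrow> bool" where
  "adj G u v \<longleftrightarrow> {u, v} \<in> snd G"

definition connected :: "'a ugraph \<Rightarrow> bool" where
  "connected G \<longleftrightarrow> fst G \<noteq> {} \<and> (\<forall>u\<in>fst G. \<forall>v\<in>fst G. (adj G)\<^sup>*\<^sup>* u v)"

definition induced_subgraph :: "'b ugraph \<Rightarrow> 'a ugraph \<Rightarrow> bool" where
  "induced_subgraph S G \<longleftrightarrow> (\<exists>f. inj_on f (fst S) \<and> f ` fst S \<subseteq> fst G \<and>
      (\<forall>u\<in>fst S. \<forall>v\<in>fst S. adj S u v \<longleftrightarrow> adj G (f u) (f v)))"

definition free :: "'b ugraph \<Rightarrow> 'a ugraph \<Rightarrow> bool" where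
  "free S G \<longleftrightarrow> \<not> induced_subgraph S G"

definition path_graph :: "nat \<Rightarrow> nat ugraph" where
  "path_graph n = ({0..<n}, {{i, i + 1} | i. i + 1 < n})"

definition edge_cut :: "'a ugraph \<Rightarrow> 'a set set \<Rightarrow> bool" where
  "edge_cut G F \<longleftrightarrow> F \<subseteq> snd G \<and> \<not> connected (fst G, snd G - F)"

definition edge_connectivity :: "'a ugraph \<Rightarrow> nat" where
  "edge_connectivity G = (LEAST k. \<exists>F. edge_cut G F \<and> card F = k)"

definition min_edge_cut :: "'a ugraph \<Rightarrow> 'a set set \<Rightarrow> bool" where
  "min_edge_cut G F \<longleftrightarrow> edge_cut G F \<and> card F = edge_connectivity G"

definition super_edge_connected :: "'a ugraph \<Rightarrow> bool" where
  "super_edge_connected G \<longleftrightarrow> connected G \<and>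
     (\<forall>F. min_edge_cut G F \<longrightarrow> (\<exists>v\<in>fst G. F = {e\<in>snd G. v \<in> e}))"

end

theory Submission
  imports Defs
begin


lemma adj_sym: "adj G u v = adj G v u" by (simp add: adj_def insert_commute)

lemma adj_graph: "graph G \<Longrightarrow> adj G u v \<Longrightarrow> u \<in> fst G \<and> v \<in> fst G \<and> u \<noteq> v"
  unfolding graph_def adj_def by fastforce

lemma adj_irrefl: "graph G \<Longrightarrow> \<not> adj G u u"
  using adj_graph by metis

lemma rtc_sym: "(adj G)\<^sup>*\<^sup>* u v \<Longrightarrow> (adj G)\<^sup>*\<^sup>* v u"
  by (induction rule: rtranclp_induct) (auto, metis adj_sym converse_rtranclp_into_rtranclp)

lemma rtc_closed: "R\<^sup>*\<^sup>* u v \<Longrightarrow> u \<in> A \<Longrightarrow> (\<And>x y. R x y \<Longrightarrow> x \<in> A \<Longrightarrow> y \<in> A) \<Longrightarrow> v \<in> A"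
  by (induction rule: rtranclp_induct) auto

lemma adj_path: "adj (path_graph n) i j \<longleftrightarrow> (j = i+1 \<or> i = j+1) \<and> max i j < n"
  unfolding adj_def path_graph_def by (auto simp: doubleton_eq_iff)

lemma ind_trans: assumes "induced_subgraph S T" "induced_subgraph T G" shows "induced_subgraph S G"
proof -
  obtain f where f: "inj_on f (fst S)" "f ` fst S \<subseteq> fst T"
      "\<forall>u\<in>fst S. \<forall>v\<in>fst S. adj S u v \<longleftrightarrow> adj T (f u) (f v)"
    using assms(1) unfolding induced_subgraph_def by blast
  obtain g where g: "inj_on g (fst T)" "g ` fst T \<subseteq> fst G"
      "\<forall>u\<in>fst T. \<forall>v\<in>fst T. adj T u v \<longleftrightarrow> adj G (g u) (g v)"
    using assms(2) unfolding induced_subgraph_def by blast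
  have "inj_on (g \<circ> f) (fst S)" using f g by (meson comp_inj_on inj_on_subset)
  moreover have "(g \<circ> f) ` fst S \<subseteq> fst G" using f g by (auto simp: image_subset_iff)
  moreover have "\<forall>u\<in>fst S. \<forall>v\<in>fst S. adj S u v \<longleftrightarrow> adj G ((g \<circ> f) u) ((g \<circ> f) v)"
    using f g by (auto simp: image_subset_iff)
  ultimately show ?thesis unfolding induced_subgraph_def by blast
qed

lemma P3_in: assumes g: "graph G" and xy: "adj G x y" and yz: "adj G y z" and xz: "\<not> adj G x z" and "x \<noteq> z"
  shows "induced_subgraph (path_graph 3) G"
proof -
  define h where "h i = (if i = 0 then x else if i = 1 then y else z)" for i :: nat
  have V: "fst (path_graph 3) = {0,1,2}" by (auto simp: path_graph_def)
  have d: "x \<noteq> y" "y \<noteq> z" "x \<in> fst G" "y \<in> fst G" "z \<in> fst G"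
    using adj_graph[OF g xy] adj_graph[OF g yz] by auto
  have "inj_on h {0,1,2}" using d \<open>x \<noteq> z\<close> by (auto simp: h_def inj_on_def)
  moreover have "h ` {0,1,2} \<subseteq> fst G" using d by (auto simp: h_def)
  moreover have "\<forall>u\<in>{0,1,2}. \<forall>v\<in>{0,1,2}. adj (path_graph 3) u v \<longleftrightarrow> adj G (h u) (h v)"
    using xy yz xz adj_irrefl[OF g] by (auto simp: adj_path h_def adj_sym)
  ultimately show ?thesis unfolding induced_subgraph_def V by blast
qed

lemma P3free_complete:
  assumes g: "graph G" and c: "connected G" and np: "\<not> induced_subgraph (path_graph 3) G"
  shows "\<forall>u\<in>fst G. \<forall>v\<in>fst G. u \<noteq> v \<longrightarrow> adj G u v"
proof -
  have key: "(adj G)\<^sup>*\<^sup>* x y \<Longrightarrow> y = x \<or> adj G x y" for x y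
  proof (induction rule: rtranclp_induct)
    case base then show ?case by simp
  next
    case (step y z)
    from step.IH show ?case
    proof
      assume "y = x" with step.hyps(2) show ?thesis by simp
    next
      assume xy: "adj G x y"
      show ?thesis
      proof (cases "z = x \<or> adj G x z")
        case True then show ?thesis by auto
      next
        case False
        then have "induced_subgraph (path_graph 3) G" using P3_in[OF g xy step.hyps(2)] by auto
        with np show ?thesis by simp
      qed
    qed
  qed
  from c show ?thesis unfolding connected_def using key by blast
qed

lemma nat_prod_bound:
  fixes a b :: nat assumes "a \<ge> 1" "b \<ge> 1"
  shows "a + b - 1 \<le> a * b" "a * b \<le> a + b - 1 \<Longrightarrow> a = 1 \<or> b = 1"
proof -
  obtain a' b' where "a = a' + 1" "b = b' + 1" using assms by (metis add.commute le_Suc_ex)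
  then show "a + b - 1 \<le> a * b" "a * b \<le> a + b - 1 \<Longrightarrow> a = 1 \<or> b = 1" by (auto simp: algebra_simps)
qed

lemma complete_super:
  assumes g: "graph G" and c: "connected G" and comp: "\<forall>u\<in>fst G. \<forall>v\<in>fst G. u \<noteq> v \<longrightarrow> adj G u v"
  shows "super_edge_connected G"
proof -
  define V where "V = fst G"
  define E where "E = snd G"
  define n where "n = card V"
  define star where "star v = {e\<in>E. v \<in> e}" for v
  have finV: "finite V" using g unfolding graph_def V_def by auto
  have EV: "E \<subseteq> Pow V" using g unfolding graph_def V_def E_def by auto
  have finE: "finite E" using finite_subset[OF EV] finV by simp
  have compE: "\<And>u v. u \<in> V \<Longrightarrow> v \<in> V \<Longrightarrow> u \<noteq> v \<Longrightarrow> {u,v} \<in> E"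
    using comp unfolding V_def E_def adj_def by auto
  have star_eq: "star v = (\<lambda>w. {v,w}) ` (V - {v})" if "v \<in> V" for v
  proof
    show "star v \<subseteq> (\<lambda>w. {v,w}) ` (V - {v})"
    proof
      fix e assume "e \<in> star v"
      then have e: "e \<in> E" "v \<in> e" unfolding star_def by auto
      then have "card e = 2" "e \<subseteq> V" using g unfolding graph_def E_def V_def by auto
      then obtain x y where "e = {x,y}" "x \<noteq> y" by (meson card_2_iff)
      with e \<open>e \<subseteq> V\<close> show "e \<in> (\<lambda>w. {v,w}) ` (V - {v})" by (auto simp: insert_commute)
    qed
  next
    show "(\<lambda>w. {v,w}) ` (V - {v}) \<subseteq> star v" using compE that unfolding star_def by auto
  qed
  have card_star: "card (star v) = n - 1" if "v \<in> V" for v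
  proof -
    have i: "inj_on (\<lambda>w. {v,w}) (V - {v})" by (auto simp: inj_on_def doubleton_eq_iff)
    show ?thesis using star_eq[OF that] card_image[OF i] that finV unfolding n_def
      by (simp add: card_Diff_singleton)
  qed
  have star_cut: "edge_cut G (star v)" if "v \<in> V" "w \<in> V" "w \<noteq> v" for v w
  proof -
    have "\<not> (adj (V, E - star v))\<^sup>*\<^sup>* v w"
    proof
      assume "(adj (V, E - star v))\<^sup>*\<^sup>* v w"
      then have "w \<in> {v}"
        by (rule rtc_closed) (auto simp: adj_def star_def)
      with that show False by simp
    qed
    then show ?thesis using that unfolding edge_cut_def connected_def star_def V_def E_def by auto
  qed
  have cut_bound: "n - 1 \<le> card F \<and> (card F = n - 1 \<longrightarrow> (\<exists>v\<in>V. F = star v))"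
    if cut: "edge_cut G F" for F
  proof -
    have FE: "F \<subseteq> E" and nc: "\<not> connected (V, E - F)"
      using cut unfolding edge_cut_def V_def E_def by auto
    have finF: "finite F" using FE finE by (rule finite_subset)
    define R where "R = adj (V, E - F)"
    have "V \<noteq> {}" using c unfolding connected_def V_def by auto
    then obtain u w where uw: "u \<in> V" "w \<in> V" "\<not> R\<^sup>*\<^sup>* u w"
      using nc unfolding connected_def R_def by auto
    define A where "A = {x\<in>V. R\<^sup>*\<^sup>* u x}"
    define B where "B = V - A"
    have uA: "u \<in> A" using uw unfolding A_def by auto
    have wB: "w \<in> B" using uw unfolding A_def B_def by auto
    have cross: "{a,b} \<in> F" if "a \<in> A" "b \<in> B" for a b
    proof (rule ccontr)
      assume nF: "{a,b} \<notin> F"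
      have "a \<noteq> b" "a \<in> V" "b \<in> V" using that unfolding A_def B_def by auto
      then have "{a,b} \<in> E" using compE by auto
      then have "R a b" using nF unfolding R_def adj_def by auto
      then have "R\<^sup>*\<^sup>* u b" using that unfolding A_def by (auto intro: rtranclp.rtrancl_into_rtrancl)
      then show False using that unfolding A_def B_def by auto
    qed
    have inj: "inj_on (\<lambda>(a,b). {a,b}) (A \<times> B)"
      unfolding inj_on_def B_def by (auto simp: doubleton_eq_iff)
    have "(\<lambda>(a,b). {a,b}) ` (A \<times> B) \<subseteq> F" using cross by auto
    then have "card (A \<times> B) \<le> card F" using card_inj_on_le[OF inj _ finF] by blast
    then have prod: "card A * card B \<le> card F" by (simp add: card_cartesian_product)
    have finA: "finite A" "finite B" using finV unfolding A_def B_def by auto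
    have AV: "A \<subseteq> V" unfolding A_def by auto
    have cB: "card B = card V - card A" unfolding B_def using card_Diff_subset[OF finA(1) AV] .
    have cA: "card A \<le> card V" using card_mono[OF finV AV] .
    have sum: "card A + card B = n" unfolding n_def using cA cB by linarith
    have "card A \<ge> 1" "card B \<ge> 1" using uA wB finA by (auto simp: Suc_le_eq card_gt_0_iff)
    then have b1: "n - 1 \<le> card F" using nat_prod_bound(1)[of "card A" "card B"] prod sum by linarith
    moreover have "\<exists>v\<in>V. F = star v" if eq: "card F = n - 1"
    proof -
      have "card A = 1 \<or> card B = 1"
        using nat_prod_bound(2)[of "card A" "card B"] prod eq sum \<open>card A \<ge> 1\<close> \<open>card B \<ge> 1\<close> by linarith
      then show ?thesis
      proof
        assume "card A = 1"
        then obtain a0 where A0: "A = {a0}" by (rule card_1_singletonE)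
        have a0V: "a0 \<in> V" using A0 unfolding A_def by auto
        have "star a0 \<subseteq> F"
        proof
          fix e assume "e \<in> star a0"
          then obtain x where "x \<in> V - {a0}" "e = {a0,x}" using star_eq[OF a0V] by auto
          then show "e \<in> F" using cross[of a0 x] A0 unfolding B_def by auto
        qed
        then have "star a0 = F" using card_subset_eq[OF finF] card_star[OF a0V] eq by simp
        then show ?thesis using a0V by blast
      next
        assume "card B = 1"
        then obtain b0 where B0: "B = {b0}" by (rule card_1_singletonE)
        have b0V: "b0 \<in> V" using B0 unfolding B_def by auto
        have "star b0 \<subseteq> F"
        proof
          fix e assume "e \<in> star b0"
          then obtain x where x: "x \<in> V - {b0}" "e = {b0,x}" using star_eq[OF b0V] by auto
          then have "x \<in> A" using B0 unfolding B_def by auto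
          then show "e \<in> F" using cross[of x b0] B0 x by (auto simp: insert_commute)
        qed
        then have "star b0 = F" using card_subset_eq[OF finF] card_star[OF b0V] eq by simp
        then show ?thesis using b0V by blast
      qed
    qed
    ultimately show ?thesis using b1 by blast
  qed
  show ?thesis unfolding super_edge_connected_def
  proof (intro conjI allI impI)
    show "connected G" by (rule c)
  next
    fix F assume m: "min_edge_cut G F"
    then have cut: "edge_cut G F" and cF: "card F = edge_connectivity G"
      unfolding min_edge_cut_def by auto
    have nc: "\<not> connected (V, E - F)" using cut unfolding edge_cut_def V_def E_def by auto
    have "V \<noteq> {}" using c unfolding connected_def V_def by auto
    then obtain u w where uw: "u \<in> V" "w \<in> V" "\<not> (adj (V, E - F))\<^sup>*\<^sup>* u w"
      using nc unfolding connected_def by auto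
    then have "u \<noteq> w" by auto
    then have sc: "edge_cut G (star u)" using star_cut[OF uw(1) uw(2)] by simp
    have "edge_connectivity G \<le> card (star u)"
      unfolding edge_connectivity_def using sc by (auto intro: Least_le)
    then have le: "card F \<le> n - 1" using cF card_star[OF uw(1)] by simp
    have ge: "n - 1 \<le> card F" using cut_bound[OF cut] by blast
    from le ge have "card F = n - 1" by linarith
    then have "\<exists>v\<in>V. F = star v" using cut_bound[OF cut] by blast
    then show "\<exists>v\<in>fst G. F = {e \<in> snd G. v \<in> e}" unfolding star_def V_def E_def .
  qed
qed



definition P4 :: "nat ugraph" where "P4 = ({0,1,2,3}, {{0,1},{1,2},{2,3}})"
definition C4 :: "nat ugraph" where "C4 = ({0,1,2,3}, {{0,1},{1,2},{2,3},{3,0}})"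

lemma conn4: assumes "fst G = {a,b,c,d}" "adj G a b" "adj G b c" "adj G c d"
  shows "connected G"
proof -
  have r: "(adj G)\<^sup>*\<^sup>* a x" if "x \<in> fst G" for x
  proof -
    have ab: "(adj G)\<^sup>*\<^sup>* a b" using assms by auto
    have ac: "(adj G)\<^sup>*\<^sup>* a c" using ab assms by (auto intro: rtranclp.rtrancl_into_rtrancl)
    have ad: "(adj G)\<^sup>*\<^sup>* a d" using ac assms by (auto intro: rtranclp.rtrancl_into_rtrancl)
    show ?thesis using that assms ab ac ad by auto
  qed
  show ?thesis unfolding connected_def using assms(1)
    by (auto intro: rtranclp_trans[OF rtc_sym[OF r] r])
qed

lemma cut_nonempty: "connected G \<Longrightarrow> edge_cut G F \<Longrightarrow> F \<noteq> {}"
  unfolding edge_cut_def by auto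

lemma graph_P4: "graph P4" unfolding P4_def graph_def by auto
lemma graph_C4: "graph C4" unfolding C4_def graph_def by auto
lemma conn_P4: "connected P4" by (rule conn4[of _ 0 1 2 3]) (auto simp: P4_def adj_def)
lemma conn_C4: "connected C4" by (rule conn4[of _ 0 1 2 3]) (auto simp: C4_def adj_def)

lemma not_super_P4: "\<not> super_edge_connected P4"
proof
  assume s: "super_edge_connected P4"
  define F :: "nat set set" where "F = {{1,2}}"
  have nc: "\<not> (adj ({0,1,2,3}, {{0,1},{1,2},{2,3}} - F))\<^sup>*\<^sup>* 0 3"
  proof
    assume "(adj ({0,1,2,3}, {{0,1},{1,2},{2,3}} - F))\<^sup>*\<^sup>* 0 3"
    then have "(3::nat) \<in> {0,1}"
      by (rule rtc_closed) (auto simp: adj_def F_def doubleton_eq_iff)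
    then show False by simp
  qed
  have cut: "edge_cut P4 F" unfolding edge_cut_def connected_def using nc
    by (auto simp: P4_def F_def)
  have "edge_connectivity P4 = 1" unfolding edge_connectivity_def
  proof (rule Least_equality)
    show "\<exists>F. edge_cut P4 F \<and> card F = 1" using cut by (auto simp: F_def)
  next
    fix k assume "\<exists>F. edge_cut P4 F \<and> card F = k"
    then obtain F' where "edge_cut P4 F'" "card F' = k" by blast
    moreover have "finite F'" using \<open>edge_cut P4 F'\<close> unfolding edge_cut_def P4_def
      by (auto intro: finite_subset)
    ultimately show "1 \<le> k" using cut_nonempty[OF conn_P4] by (metis card_0_eq less_one not_le)
  qed
  then have "min_edge_cut P4 F" using cut unfolding min_edge_cut_def by (auto simp: F_def)
  then obtain v where v: "v \<in> {0,1,2,3}" "F = {e\<in>{{0,1},{1,2},{2,3}}. v \<in> e}"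
    using s unfolding super_edge_connected_def P4_def by auto
  then show False
  proof (cases "v \<in> {0,1}")
    case True
    then have "{0,1} \<in> F" using v(2) by auto
    then show False by (auto simp: F_def doubleton_eq_iff)
  next
    case False
    then have "{2,3} \<in> F" using v by auto
    then show False by (auto simp: F_def doubleton_eq_iff)
  qed
qed

lemma not_super_C4: "\<not> super_edge_connected C4"
proof
  assume s: "super_edge_connected C4"
  define F :: "nat set set" where "F = {{1,2},{3,0}}"
  have nc: "\<not> (adj ({0,1,2,3}, {{0,1},{1,2},{2,3},{3,0}} - F))\<^sup>*\<^sup>* 0 3"
  proof
    assume "(adj ({0,1,2,3}, {{0,1},{1,2},{2,3},{3,0}} - F))\<^sup>*\<^sup>* 0 3"
    then have "(3::nat) \<in> {0,1}"
      by (rule rtc_closed) (auto simp: adj_def F_def doubleton_eq_iff)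
    then show False by simp
  qed
  have cut: "edge_cut C4 F" unfolding edge_cut_def connected_def using nc
    by (auto simp: C4_def F_def)
  have cF: "card F = 2" by (simp add: F_def doubleton_eq_iff)
  have "edge_connectivity C4 = 2" unfolding edge_connectivity_def
  proof (rule Least_equality)
    show "\<exists>F. edge_cut C4 F \<and> card F = 2" using cut cF by auto
  next
    fix k assume "\<exists>F. edge_cut C4 F \<and> card F = k"
    then obtain F' where c': "edge_cut C4 F'" "card F' = k" by blast
    show "2 \<le> k"
    proof (rule ccontr)
      assume "\<not> 2 \<le> k"
      moreover have "F' \<noteq> {}" using cut_nonempty[OF conn_C4 c'(1)] .
      moreover have "finite F'" using c'(1) unfolding edge_cut_def C4_def
        by (auto intro: finite_subset)
      ultimately have "card F' = 1" using c'(2) by (metis One_nat_def Suc_lessI card_0_eq less_2_cases not_le)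
      then obtain e where e: "F' = {e}" by (rule card_1_singletonE)
      have eE: "e \<in> {{0,1},{1,2},{2,3},{3,0}}" using c'(1) e unfolding edge_cut_def C4_def by auto
      have "connected ({0,1,2,3}, {{0,1},{1,2},{2,3},{3,0}} - {e})"
      proof -
        { assume "e = {0,1}" then have ?thesis
            by (intro conn4[of _ 1 2 3 0]) (auto simp: adj_def doubleton_eq_iff) }
        moreover
        { assume "e = {1,2}" then have ?thesis
            by (intro conn4[of _ 2 3 0 1]) (auto simp: adj_def doubleton_eq_iff) }
        moreover
        { assume "e = {2,3}" then have ?thesis
            by (intro conn4[of _ 3 0 1 2]) (auto simp: adj_def doubleton_eq_iff) }
        moreover
        { assume "e = {3,0}" then have ?thesis
            by (intro conn4[of _ 0 1 2 3]) (auto simp: adj_def doubleton_eq_iff) }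
        ultimately show ?thesis using eE by blast
      qed
      then show False using c'(1) e unfolding edge_cut_def C4_def by auto
    qed
  qed
  then have "min_edge_cut C4 F" using cut cF unfolding min_edge_cut_def by auto
  then obtain v where v: "v \<in> {0,1,2,3}" "F = {e\<in>{{0,1},{1,2},{2,3},{3,0}}. v \<in> e}"
    using s unfolding super_edge_connected_def C4_def by auto
  then show False
  proof (cases "v \<in> {0,1}")
    case True
    then have "{0,1} \<in> F" using v(2) by auto
    then show False by (auto simp: F_def doubleton_eq_iff)
  next
    case False
    then have "{2,3} \<in> F" using v by auto
    then show False by (auto simp: F_def doubleton_eq_iff)
  qed
qed



lemma P_V: "fst (path_graph n) = {0..<n}" by (simp add: path_graph_def)

lemma edges_card:
  assumes gS: "graph S" and gG: "graph G" and inj: "inj_on f (fst S)" and im: "f ` fst S = fst G"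
    and ad: "\<forall>u\<in>fst S. \<forall>v\<in>fst S. adj S u v \<longleftrightarrow> adj G (f u) (f v)"
  shows "card (snd S) = card (snd G)"
proof -
  have "snd G = (image f) ` snd S"
  proof
    show "snd G \<subseteq> (image f) ` snd S"
    proof
      fix e assume e: "e \<in> snd G"
      then have "card e = 2" "e \<subseteq> fst G" using gG unfolding graph_def by auto
      then obtain x y where xy: "e = {x,y}" "x \<in> fst G" "y \<in> fst G" by (auto simp: card_2_iff)
      then obtain u v where uv: "u \<in> fst S" "v \<in> fst S" "x = f u" "y = f v" using im by blast
      then have "adj S u v" using ad e xy unfolding adj_def by auto
      then have "{u,v} \<in> snd S" unfolding adj_def .
      moreover have "e = f ` {u,v}" using xy uv by auto
      ultimately show "e \<in> (image f) ` snd S" by blast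
    qed
  next
    show "(image f) ` snd S \<subseteq> snd G"
    proof
      fix e' assume "e' \<in> (image f) ` snd S"
      then obtain e where e: "e \<in> snd S" "e' = f ` e" by auto
      then have "card e = 2" "e \<subseteq> fst S" using gS unfolding graph_def by auto
      then obtain u v where uv: "e = {u,v}" "u \<in> fst S" "v \<in> fst S" by (auto simp: card_2_iff)
      then have "adj S u v" using e unfolding adj_def by auto
      then have "adj G (f u) (f v)" using ad uv by auto
      then show "e' \<in> snd G" using e uv unfolding adj_def by auto
    qed
  qed
  moreover have "inj_on (image f) (snd S)"
    using inj_on_image_Pow[OF inj] gS unfolding graph_def by (auto intro: inj_on_subset)
  ultimately show ?thesis by (simp add: card_image)
qed

lemma isolated:
  assumes g: "graph S" and c: "connected S" and x: "x \<in> fst S" and y: "y \<in> fst S" "x \<noteq> y"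
    and iso: "\<forall>z\<in>fst S. \<not> adj S x z"
  shows False
proof -
  have "(adj S)\<^sup>*\<^sup>* x y" using c x y unfolding connected_def by auto
  then show False
  proof (cases rule: converse_rtranclpE)
    case base then show False using y by simp
  next
    case (step z) then show False using iso adj_graph[OF g] by blast
  qed
qed

lemma emb3: assumes g: "graph S" and V: "fst S = {a,b,c}" and d: "a\<noteq>b" "b\<noteq>c" "a\<noteq>c"
  and ab: "adj S a b" and bc: "adj S b c" and ac: "\<not> adj S a c"
  shows "induced_subgraph S (path_graph 3)"
proof -
  define h where "h x = (if x = a then 0 else if x = b then 1 else (2::nat))" for x
  have "inj_on h {a,b,c}" using d by (auto simp: h_def inj_on_def)
  moreover have "h ` {a,b,c} \<subseteq> fst (path_graph 3)" using d by (auto simp: h_def path_graph_def)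
  moreover have "\<forall>u\<in>{a,b,c}. \<forall>v\<in>{a,b,c}. adj S u v \<longleftrightarrow> adj (path_graph 3) (h u) (h v)"
    using ab bc ac d adj_irrefl[OF g] by (auto simp: adj_path h_def adj_sym)
  ultimately show ?thesis unfolding induced_subgraph_def V by blast
qed

lemma adj_P4: "adj P4 x y \<Longrightarrow> x = y + 1 \<or> y = x + 1"
  unfolding adj_def P4_def by (auto simp: doubleton_eq_iff)

lemma forward:
  assumes gS: "graph S" and cS: "connected S"
    and h1: "induced_subgraph S P4" and h2: "induced_subgraph S C4"
  shows "induced_subgraph S (path_graph 3)"
proof -
  define V where "V = fst S"
  have finV: "finite V" and ne: "V \<noteq> {}" using gS cS unfolding graph_def connected_def V_def by auto
  obtain f where f: "inj_on f V" "f ` V \<subseteq> fst P4" "\<forall>u\<in>V. \<forall>v\<in>V. adj S u v \<longleftrightarrow> adj P4 (f u) (f v)"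
    using h1 unfolding induced_subgraph_def V_def by blast
  obtain g where g: "inj_on g V" "g ` V \<subseteq> fst C4" "\<forall>u\<in>V. \<forall>v\<in>V. adj S u v \<longleftrightarrow> adj C4 (g u) (g v)"
    using h2 unfolding induced_subgraph_def V_def by blast
  have c4: "card (fst P4) = 4" "card (fst C4) = 4" by (simp_all add: P4_def C4_def)
  have "card V \<le> 4" using card_inj_on_le[OF f(1) f(2)] c4 by (simp add: P4_def)
  moreover have "card V \<noteq> 4"
  proof
    assume cV: "card V = 4"
    have "f ` V = fst P4"
      using card_subset_eq[OF _ f(2)] card_image[OF f(1)] cV c4 by (simp add: P4_def)
    then have e1: "card (snd S) = card (snd P4)" using edges_card[OF gS graph_P4] f unfolding V_def by blast
    have "g ` V = fst C4"
      using card_subset_eq[OF _ g(2)] card_image[OF g(1)] cV c4 by (simp add: C4_def)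
    then have e2: "card (snd S) = card (snd C4)" using edges_card[OF gS graph_C4] g unfolding V_def by blast
    have "card (snd P4) = 3" "card (snd C4) = 4" by (simp_all add: P4_def C4_def doubleton_eq_iff)
    then show False using e1 e2 by simp
  qed
  moreover have "card V \<noteq> 0" using finV ne by simp
  ultimately have "card V = 1 \<or> card V = 2 \<or> card V = 3" by linarith
  moreover
  { assume "card V = 1"
    then obtain a where Va: "V = {a}" by (rule card_1_singletonE)
    have "induced_subgraph S (path_graph 3)" unfolding induced_subgraph_def
      apply (rule exI[of _ "\<lambda>_. 0::nat"])
      using Va adj_irrefl[OF gS] by (auto simp: V_def P_V adj_path) }
  moreover
  { assume "card V = 2"
    then obtain a b where Vab: "V = {a,b}" "a \<noteq> b" by (auto simp: card_2_iff)
    have ab: "adj S a b"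
    proof (rule ccontr)
      assume "\<not> adj S a b"
      then show False using isolated[OF gS cS, of a b] Vab adj_irrefl[OF gS] unfolding V_def by auto
    qed
    define h where "h x = (if x = a then 0 else (1::nat))" for x
    have "induced_subgraph S (path_graph 3)" unfolding induced_subgraph_def
      apply (rule exI[of _ h])
      using Vab ab adj_irrefl[OF gS] by (auto simp: V_def P_V adj_path h_def inj_on_def adj_sym) }
  moreover
  { assume "card V = 3"
    then obtain a b c where Vabc: "V = {a,b,c}" "a \<noteq> b" "b \<noteq> c" "a \<noteq> c" by (auto simp: card_3_iff)
    have VS: "fst S = {a,b,c}" using Vabc(1) unfolding V_def .
    have iso: False if "x \<in> {a,b,c}" "y \<in> {a,b,c}" "x \<noteq> y" "\<not> adj S x a" "\<not> adj S x b" "\<not> adj S x c" for x y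
    proof -
      have "\<forall>z\<in>fst S. \<not> adj S x z" using that VS by auto
      then show False using isolated[OF gS cS, of x y] that VS by auto
    qed
    have irr: "\<not> adj S a a" "\<not> adj S b b" "\<not> adj S c c" using adj_irrefl[OF gS] by auto
    have sab: "adj S b a = adj S a b" and sac: "adj S c a = adj S a c" and sbc: "adj S c b = adj S b c"
      by (simp_all add: adj_sym)
    have tri: False if "adj S a b" "adj S a c" "adj S b c"
    proof -
      have "adj P4 (f a) (f b)" "adj P4 (f a) (f c)" "adj P4 (f b) (f c)"
        using f(3) Vabc that by auto
      then have "f a = f b + 1 \<or> f b = f a + 1" "f a = f c + 1 \<or> f c = f a + 1" "f b = f c + 1 \<or> f c = f b + 1"
        using adj_P4 by blast+
      then show False by presburger
    qed
    have "induced_subgraph S (path_graph 3)"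
    proof (cases "adj S a b")
      case ab: True
      show ?thesis
      proof (cases "adj S b c")
        case bc: True
        then have "\<not> adj S a c" using tri ab by blast
        then show ?thesis using emb3[OF gS VS Vabc(2-4) ab bc] by blast
      next
        case nbc: False
        show ?thesis
        proof (cases "adj S a c")
          case ac: True
          have V2: "fst S = {b,a,c}" using VS by (simp add: insert_commute)
          show ?thesis using emb3[OF gS V2 Vabc(2)[symmetric] Vabc(4) Vabc(3)] ab ac nbc sab by simp
        next
          case nac: False
          show ?thesis using iso[of c a] nac nbc irr sac sbc Vabc(4) by auto
        qed
      qed
    next
      case nab: False
      show ?thesis
      proof (cases "adj S a c \<and> adj S b c")
        case True
        have V2: "fst S = {a,c,b}" using VS by (simp add: insert_commute)
        show ?thesis using emb3[OF gS V2 Vabc(4) Vabc(3)[symmetric] Vabc(2)] True nab sbc by simp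
      next
        case False
        then show ?thesis using iso[of a b] iso[of b a] nab irr sab Vabc by auto
      qed
    qed }
  ultimately show ?thesis by blast
qed

theorem theorem2p1:
  fixes S :: "'b ugraph"
  assumes "graph S" and "connected S"
  shows "(\<forall>G :: nat ugraph. graph G \<and> connected G \<and> free S G \<longrightarrow> super_edge_connected G)
         \<longleftrightarrow> induced_subgraph S (path_graph 3)"
proof
  assume L: "\<forall>G :: nat ugraph. graph G \<and> connected G \<and> free S G \<longrightarrow> super_edge_connected G"
  have h1: "induced_subgraph S P4" using L graph_P4 conn_P4 not_super_P4 unfolding free_def by blast
  have h2: "induced_subgraph S C4" using L graph_C4 conn_C4 not_super_C4 unfolding free_def by blast
  show "induced_subgraph S (path_graph 3)" by (rule forward[OF assms h1 h2])
next
  assume R: "induced_subgraph S (path_graph 3)"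
  show "\<forall>G :: nat ugraph. graph G \<and> connected G \<and> free S G \<longrightarrow> super_edge_connected G"
  proof (intro allI impI, elim conjE)
    fix G :: "nat ugraph" assume g: "graph G" and c: "connected G" and fr: "free S G"
    have "\<not> induced_subgraph (path_graph 3) G" using ind_trans[OF R] fr unfolding free_def by blast
    then show "super_edge_connected G" using complete_super[OF g c P3free_complete[OF g c]] by blast
  qed
qed

end
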